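(* For every $N$-relay FD 1-2-1 network with graph $G=([0:N+1],E)$ and positive rational link capacities as in the context, assuming $\mathcal P\neq\emptyset$, there exists a path $p\in\mathcal P$ with $\mathsf C_p\ge\frac{1}{2N+2}\mathsf{C}_{\rm cs,iid}$, where $\mathsf{C}_{\rm cs,iid}$ is computed with FD states.
   Context: Nodes are $[0:N+1]$; node $0$ is the source, $N+1$ the destination, $[1:N]$ relays. $E\subseteq\{(i,j): i\in[0:N],\ j\in[1:N+1],\ i\ne j\}$ is a set of directed links; each $(i,j)\in E$ has a positive rational capacity $\ell_{j,i}$, and $\ell_{j,i}=0$ for $(i,j)\notin E$. FD network states: a state $s$ consists of sets $s_{i,t}\subseteq[1:N+1]\setminus\{i\}$ and $s_{i,r}\subseteq[0:N]\setminus\{i\}$, each of cardinality at most $1$, for $i\in[0:N+1]$, with $s_{0,r}=s_{N+1,t}=\emptyset$; $\mathcal S$ is the set of all states. Link $(i,j)$ is active in $s$ if $j\in s_{i,t}$ and $i\in s_{j,r}$. $\mathsf{C}_{\rm cs,iid}=\max_{\lambda}\min_{\Omega}\sum_{i\in\Omega,\ j\in\Omega^c}\big(\sum_{s\in\mathcal S:\ (i,j)\text{ active in }s}\lambda_s\big)\ell_{j,i}$, maximum over probability vectors $(\lambda_s)_{s\in\mathcal S}$, minimum over $\Omega$ with $0\in\Omega\subseteq[0:N]$, $\Omega^c=[0:N+1]\setminus\Omega$. $\mathcal P$ is the set of all directed paths of distinct nodes from $0$ to $N+1$ using links of $E$; $\mathsf C_p=\min_{(i,j)\text{ consecutive on }p}\ell_{j,i}$.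 *)

theory Defs
  imports Complex_Main
begin

text \<open>Nodes are natural numbers 0..N+1. A FD state is a pair (st, sr) of functions
  giving, for each node i, its transmit set st i and receive set sr i.
  Outside [0:N+1] both sets are required to be empty (so the state set is finite).\<close>

type_synonym fdstate = "(nat \<Rightarrow> nat set) \<times> (nat \<Rightarrow> nat set)"

definition fd_states :: "nat \<Rightarrow> fdstate set" where
  "fd_states N = {(st, sr).
     (\<forall>i. i \<le> N + 1 \<longrightarrow>
        st i \<subseteq> {1..N+1} - {i} \<and> card (st i) \<le> 1 \<and>
        sr i \<subseteq> {0..N} - {i} \<and> card (sr i) \<le> 1) \<and>
     (\<forall>i. i > N + 1 \<longrightarrow> st i = {} \<and> sr i = {}) \<and>
     sr 0 = {} \<and> st (N + 1) = {}}"

definition link_active :: "fdstate \<Rightarrow> nat \<Rightarrow> nat \<Rightarrow> bool" where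
  "link_active s i j \<longleftrightarrow> j \<in> fst s i \<and> i \<in> snd s j"

definition prob_vectors :: "nat \<Rightarrow> (fdstate \<Rightarrow> real) set" where
  "prob_vectors N = {lam. (\<forall>s\<in>fd_states N. lam s \<ge> 0) \<and> (\<Sum>s\<in>fd_states N. lam s) = 1}"

text \<open>Value of the cut \<Omega> under schedule lam; capacities l j i = \<ell>_{j,i} for link (i,j).\<close>
definition cut_value :: "nat \<Rightarrow> (nat \<Rightarrow> nat \<Rightarrow> real) \<Rightarrow> (fdstate \<Rightarrow> real) \<Rightarrow> nat set \<Rightarrow> real" where
  "cut_value N l lam \<Omega> =
     (\<Sum>i\<in>\<Omega>. \<Sum>j\<in>{0..N+1} - \<Omega>.
        (\<Sum>s\<in>{s\<in>fd_states N. link_active s i j}. lam s) * l j i)"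

definition cuts :: "nat \<Rightarrow> nat set set" where
  "cuts N = {\<Omega>. 0 \<in> \<Omega> \<and> \<Omega> \<subseteq> {0..N}}"

text \<open>C_cs,iid = max over lam of min over cuts (the max is attained; written as Sup).\<close>
definition C_cs_iid :: "nat \<Rightarrow> (nat \<Rightarrow> nat \<Rightarrow> real) \<Rightarrow> real" where
  "C_cs_iid N l = (SUP lam\<in>prob_vectors N. Min (cut_value N l lam ` cuts N))"

definition paths :: "nat \<Rightarrow> (nat \<times> nat) set \<Rightarrow> nat list set" where
  "paths N E = {p. p \<noteq> [] \<and> distinct p \<and> hd p = 0 \<and> last p = N + 1 \<and>
                   (\<forall>k. Suc k < length p \<longrightarrow> (p ! k, p ! Suc k) \<in> E)}"

definition path_cap :: "(nat \<Rightarrow> nat \<Rightarrow> real) \<Rightarrow> nat list \<Rightarrow> real" where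
  "path_cap l p = Min {l (p ! Suc k) (p ! k) | k. Suc k < length p}"

end

theory Submission
  imports Defs "HOL-Library.FuncSet"
begin

lemma fd_finite: "finite (fd_states N)"
proof -
  let ?A = "{0..N+1}"
  let ?P = "PiE ?A (\<lambda>_. Pow ?A)"
  let ?g = "\<lambda>(a::nat\<Rightarrow>nat set,b::nat\<Rightarrow>nat set). ((\<lambda>i. if i \<le> N+1 then a i else {}), (\<lambda>i. if i \<le> N+1 then b i else {}))"
  have "fd_states N \<subseteq> ?g ` (?P \<times> ?P)"
  proof
    fix x assume x: "x \<in> fd_states N"
    obtain st sr where xs: "x = (st,sr)" by (cases x)
    have "x = ?g (restrict st ?A, restrict sr ?A)" using x xs
      by (auto simp: fd_states_def fun_eq_iff not_le)
    moreover have "(restrict st ?A, restrict sr ?A) \<in> ?P \<times> ?P" using x xs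
      by (fastforce simp: fd_states_def)
    ultimately show "x \<in> ?g ` (?P \<times> ?P)" by blast
  qed
  then show ?thesis by (rule finite_subset) (simp add: finite_PiE)
qed

lemma prob_nonempty: "prob_vectors N \<noteq> {}"
proof -
  let ?s0 = "((\<lambda>_. {}), (\<lambda>_. {})) :: fdstate"
  have s0: "?s0 \<in> fd_states N" by (simp add: fd_states_def)
  let ?lam = "\<lambda>s. if s = ?s0 then 1 else (0::real)"
  have "?lam \<in> prob_vectors N"
    unfolding prob_vectors_def using s0 fd_finite[of N]
    by (simp add: sum.delta)
  then show ?thesis by blast
qed

lemma inner_bound:
  fixes lam :: "fdstate \<Rightarrow> real"
  assumes F: "s \<in> fd_states N" and i: "i \<le> N + 1" and lam: "lam s \<ge> 0" and fJ: "finite J"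
  shows "(\<Sum>j\<in>J. if link_active s i j then lam s else 0) \<le> lam s"
proof -
  have fin: "finite (fst s i)"
    using F i by (cases s) (auto simp: fd_states_def intro: finite_subset)
  have c1: "card (fst s i) \<le> 1"
    using F i by (cases s) (auto simp: fd_states_def)
  have "(\<Sum>j\<in>J. if link_active s i j then lam s else 0) = (\<Sum>j\<in>{j\<in>J. link_active s i j}. lam s)"
    by (rule sum.inter_filter[OF fJ, symmetric])
  also have "\<dots> = real (card ({j\<in>J. link_active s i j})) * lam s" by (rule sum_constant)
  also have "\<dots> \<le> 1 * lam s"
  proof -
    have "{j\<in>J. link_active s i j} \<subseteq> fst s i" by (auto simp: link_active_def)
    then have "card ({j\<in>J. link_active s i j}) \<le> 1"
      using card_mono[OF fin] c1 by (meson le_trans)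
    then show ?thesis using lam by (intro mult_right_mono) auto
  qed
  finally show ?thesis by simp
qed

lemma cut_bound:
  assumes lam: "lam \<in> prob_vectors N" and Om: "\<Omega> \<subseteq> {0..N}"
    and lt: "\<forall>i\<in>\<Omega>. \<forall>j\<in>{0..N+1} - \<Omega>. l j i \<le> t" and t: "t \<ge> 0"
  shows "cut_value N l lam \<Omega> \<le> t * (real N + 1)"
proof -
  let ?F = "fd_states N"
  have fin: "finite ?F" by (rule fd_finite)
  have nn: "\<forall>s\<in>?F. lam s \<ge> 0" and one: "sum lam ?F = 1" using lam by (auto simp: prob_vectors_def)
  have "cut_value N l lam \<Omega> \<le> (\<Sum>i\<in>\<Omega>. \<Sum>j\<in>{0..N+1} - \<Omega>.
        (\<Sum>s\<in>{s\<in>?F. link_active s i j}. lam s) * t)"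
    unfolding cut_value_def
  proof (intro sum_mono)
    fix i j assume "i \<in> \<Omega>" "j \<in> {0..N+1} - \<Omega>"
    then have "l j i \<le> t" using lt by blast
    moreover have "(\<Sum>s\<in>{s\<in>?F. link_active s i j}. lam s) \<ge> 0" using nn by (intro sum_nonneg) auto
    ultimately show "(\<Sum>s\<in>{s\<in>?F. link_active s i j}. lam s) * l j i \<le> (\<Sum>s\<in>{s\<in>?F. link_active s i j}. lam s) * t"
      by (rule mult_left_mono)
  qed
  also have "\<dots> = t * (\<Sum>i\<in>\<Omega>. \<Sum>j\<in>{0..N+1} - \<Omega>. \<Sum>s\<in>?F. if link_active s i j then lam s else 0)"
    by (simp add: sum_distrib_left sum.inter_filter[OF fin] mult.commute)
  also have "\<dots> = t * (\<Sum>i\<in>\<Omega>. \<Sum>s\<in>?F. \<Sum>j\<in>{0..N+1} - \<Omega>. if link_active s i j then lam s else 0)"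
    by (intro arg_cong[where f="(*) t"] sum.cong refl sum.swap)
  also have "\<dots> \<le> t * (\<Sum>i\<in>\<Omega>. \<Sum>s\<in>?F. lam s)"
  proof (intro mult_left_mono sum_mono t)
    fix i s assume "i \<in> \<Omega>" "s \<in> ?F"
    then show "(\<Sum>j\<in>{0..N+1} - \<Omega>. if link_active s i j then lam s else 0) \<le> lam s"
      using inner_bound[of s N i lam "{0..N+1} - \<Omega>"] Om nn by auto
  qed
  also have "\<dots> = t * real (card \<Omega>)" using one by simp
  also have "\<dots> \<le> t * (real N + 1)"
  proof -
    have "card \<Omega> \<le> card {0..N}" using Om by (intro card_mono) auto
    then show ?thesis using t by (intro mult_left_mono) auto
  qed
  finally show ?thesis .
qed


definition okp :: "(nat \<times> nat) set \<Rightarrow> (nat \<Rightarrow> nat \<Rightarrow> real) \<Rightarrow> real \<Rightarrow> nat list \<Rightarrow> bool" where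
  "okp E l t q \<longleftrightarrow> q \<noteq> [] \<and> distinct q \<and> hd q = 0 \<and>
     (\<forall>k. Suc k < length q \<longrightarrow> (q!k, q!Suc k) \<in> E \<and> t \<le> l (q!Suc k) (q!k))"

lemma okp_take:
  assumes "okp E l t q" "m < length q"
  shows "okp E l t (take (Suc m) q) \<and> last (take (Suc m) q) = q!m"
  using assms unfolding okp_def
  by (auto simp: last_conv_nth hd_conv_nth min_def intro!: arg_cong[where f="(!) q"])

lemma okp_snoc:
  assumes q: "okp E l t q" and j: "j \<notin> set q" and e: "(last q, j) \<in> E" and lt: "t \<le> l j (last q)"
  shows "okp E l t (q @ [j])"
proof -
  have "\<forall>k. Suc k < length (q @ [j]) \<longrightarrow> ((q @ [j]) ! k, (q @ [j]) ! Suc k) \<in> E \<and> t \<le> l ((q @ [j]) ! Suc k) ((q @ [j]) ! k)"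
  proof (intro allI impI)
    fix k assume k: "Suc k < length (q @ [j])"
    show "((q @ [j]) ! k, (q @ [j]) ! Suc k) \<in> E \<and> t \<le> l ((q @ [j]) ! Suc k) ((q @ [j]) ! k)"
    proof (cases "Suc k < length q")
      case True
      then show ?thesis using q by (simp add: okp_def nth_append)
    next
      case False
      then have kk: "Suc k = length q" using k by simp
      have "q ! k = last q" using kk[symmetric] q by (simp add: okp_def last_conv_nth)
      then show ?thesis using kk e lt by (simp add: nth_append)
    qed
  qed
  then show ?thesis using q j unfolding okp_def by simp
qed

lemma okp_last:
  assumes q: "okp E l t q" and E_sub: "E \<subseteq> {(i, j). i \<le> N \<and> 1 \<le> j \<and> j \<le> N + 1 \<and> i \<noteq> j}"
  shows "last q \<le> N + 1"
proof (cases "length q = 1")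
  case True
  then obtain a where "q = [a]" by (cases q) auto
  then show ?thesis using q by (simp add: okp_def)
next
  case False
  then have "Suc (length q - 2) < length q" "Suc (length q - 2) = length q - 1"
    using q by (auto simp: okp_def) (cases q; auto)+
  then have "(q ! (length q - 2), q ! (length q - 1)) \<in> E" using q by (metis okp_def)
  then have "q ! (length q - 1) \<le> N + 1" using E_sub by auto
  then show ?thesis using q by (simp add: okp_def last_conv_nth)
qed

lemma path_cap_attained:
  assumes "p \<in> paths N E"
  shows "\<exists>k. Suc k < length p \<and> path_cap l p = l (p ! Suc k) (p ! k)"
proof -
  let ?S = "{l (p ! Suc k) (p ! k) | k. Suc k < length p}"
  have "length p \<noteq> 1"
  proof
    assume "length p = 1"
    then obtain a where "p = [a]" by (cases p) auto
    then show False using assms by (auto simp: paths_def)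
  qed
  moreover have "p \<noteq> []" using assms by (simp add: paths_def)
  ultimately have "Suc 0 < length p" by (cases p) auto
  then have ne: "?S \<noteq> {}" by blast
  have fin: "finite ?S"
  proof -
    have "?S = (\<lambda>k. l (p ! Suc k) (p ! k)) ` {k. Suc k < length p}" by blast
    moreover have "finite {k. Suc k < length p}"
      by (rule finite_subset[of _ "{..<length p}"]) auto
    ultimately show ?thesis by simp
  qed
  have "Min ?S \<in> ?S" using Min_in[OF fin ne] .
  then show ?thesis unfolding path_cap_def by blast
qed

lemma okp_path:
  assumes "okp E l t q" "last q = N + 1"
  shows "q \<in> paths N E \<and> t \<le> path_cap l q"
proof -
  have p: "q \<in> paths N E" using assms by (auto simp: okp_def paths_def)
  obtain k where "Suc k < length q" "path_cap l q = l (q ! Suc k) (q ! k)"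
    using path_cap_attained[OF p] by blast
  then show ?thesis using p assms(1) by (simp add: okp_def)
qed

theorem lemma3:
  fixes N :: nat and E :: "(nat \<times> nat) set" and l :: "nat \<Rightarrow> nat \<Rightarrow> real"
  assumes E_sub: "E \<subseteq> {(i, j). i \<le> N \<and> 1 \<le> j \<and> j \<le> N + 1 \<and> i \<noteq> j}"
    and cap_pos: "\<forall>(i, j)\<in>E. l j i > 0 \<and> l j i \<in> \<rat>"
    and cap_zero: "\<forall>i j. (i, j) \<notin> E \<longrightarrow> l j i = 0"
    and nonempty: "paths N E \<noteq> {}"
  shows "\<exists>p\<in>paths N E. path_cap l p \<ge> C_cs_iid N l / (2 * real N + 2)"
proof -
  obtain p0 where p0: "p0 \<in> paths N E" using nonempty by blast
  have cap0: "path_cap l p0 > 0"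
  proof -
    obtain k where k: "Suc k < length p0" "path_cap l p0 = l (p0 ! Suc k) (p0 ! k)"
      using path_cap_attained[OF p0] by blast
    have "(p0 ! k, p0 ! Suc k) \<in> E" using p0 k(1) by (simp add: paths_def)
    then show ?thesis using cap_pos k(2) by auto
  qed
  define C where "C = C_cs_iid N l"
  show ?thesis
  proof (cases "C \<le> 0")
    case True
    have "C / (2 * real N + 2) \<le> 0" using True by (simp add: divide_nonpos_pos)
    then have "C_cs_iid N l / (2 * real N + 2) \<le> path_cap l p0" using cap0 unfolding C_def by simp
    then show ?thesis using p0 by blast
  next
    case False
    define t where "t = C / (2 * real N + 2)"
    have tpos: "t > 0" using False by (simp add: t_def)
    show ?thesis
    proof (rule ccontr)
      assume "\<not> ?thesis"
      then have H: "\<forall>p\<in>paths N E. path_cap l p < t" unfolding t_def C_def by (simp add: not_le)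
      define R where "R = {i. \<exists>q. okp E l t q \<and> last q = i}"
      have "okp E l t [0]" by (simp add: okp_def)
      then have R0: "0 \<in> R" unfolding R_def by force
      have RN: "R \<subseteq> {0..N}"
      proof
        fix i assume "i \<in> R"
        then obtain q where q: "okp E l t q" "last q = i" unfolding R_def by blast
        have "i \<le> N + 1" using okp_last[OF q(1) E_sub] q(2) by simp
        moreover have "i \<noteq> N + 1"
        proof
          assume "i = N + 1"
          then have "q \<in> paths N E \<and> t \<le> path_cap l q" using okp_path q by blast
          then show False using H by fastforce
        qed
        ultimately show "i \<in> {0..N}" by simp
      qed
      have bound: "\<forall>i\<in>R. \<forall>j\<in>{0..N+1} - R. l j i \<le> t"
      proof (intro ballI)
        fix i j assume i: "i \<in> R" and j: "j \<in> {0..N+1} - R"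
        show "l j i \<le> t"
        proof (cases "(i, j) \<in> E")
          case False
          then show ?thesis using cap_zero tpos by auto
        next
          case True
          show ?thesis
          proof (rule ccontr)
            assume "\<not> l j i \<le> t"
            then have lt: "t \<le> l j i" by simp
            obtain q where q: "okp E l t q" "last q = i" using i unfolding R_def by blast
            show False
            proof (cases "j \<in> set q")
              case True
              then obtain m where m: "m < length q" "q ! m = j" by (auto simp: in_set_conv_nth)
              then have "j \<in> R" using okp_take[OF q(1) m(1)] m(2) unfolding R_def by blast
              then show False using j by simp
            next
              case False
              have "okp E l t (q @ [j])" using okp_snoc[OF q(1) False] q(2) True lt by simp
              moreover have "last (q @ [j]) = j" by simp
              ultimately have "j \<in> R" unfolding R_def by blast
              then show False using j by simp
            qed
          qed
        qed
      qed
      have Rc: "R \<in> cuts N" using R0 RN by (simp add: cuts_def)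
      have finc: "finite (cuts N)"
        by (rule finite_subset[of _ "Pow {0..N}"]) (auto simp: cuts_def)
      have "\<forall>lam\<in>prob_vectors N. Min (cut_value N l lam ` cuts N) \<le> C / 2"
      proof
        fix lam assume lam: "lam \<in> prob_vectors N"
        have "Min (cut_value N l lam ` cuts N) \<le> cut_value N l lam R"
          using Rc finc by (intro Min_le) auto
        also have "\<dots> \<le> t * (real N + 1)"
          using cut_bound[OF lam RN bound] tpos by simp
        also have "\<dots> = C / 2" unfolding t_def by (simp add: field_simps)
        finally show "Min (cut_value N l lam ` cuts N) \<le> C / 2" .
      qed
      then have "C \<le> C / 2" unfolding C_def C_cs_iid_def
        by (intro cSUP_least prob_nonempty) (simp add: C_def C_cs_iid_def)
      then show False using False by simp
    qed
  qed
qed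

end
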